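(* The following transitive interval exchange transformations exist: (a) for each $f\in\{1,2,3\}$, a transitive $4$-IET with exactly $f$ flips and without fake discontinuities; (b) a transitive $5$-IET with exactly $5$ flips having exactly one fake discontinuity; (c) a transitive $5$-IET with exactly $5$ flips and without fake discontinuities.
   Context: An $n$-IET $T$ of $[0,\ell]$ is given by a partition $0=a_0<\dots<a_n=\ell$, domain intervals $I_i=(a_{i-1},a_i)$, and an injective map $T:\bigcup I_i\to[0,\ell]$ that is an isometry on each $I_i$ and cannot be continuously extended to a larger open set. Let $J_1,\dots,J_n$ be the range intervals, ordered left to right. Define the permutation $\pi$ of $\{1,\dots,n\}$ by $T(I_i)=J_{\pi(i)}$ and $\theta_i=+1$ if $T$ preserves orientation on $I_i$, $\theta_i=-1$ if it reverses it (a flip). $T$ has a fake discontinuity if precisely one of the following happens: (a) for exactly one $1\le i\le n-1$, $\pi(i)=n$, $\pi(i+1)=1$ and $\theta_i=\theta_{i+1}=+1$; (b) for exactly one $1\le i\le n-1$, $\pi(i)=1$, $\pi(i+1)=n$ and $\theta_i=\theta_{i+1}=-1$; (c) $\pi(1)=\pi(n)+1$ and $\theta_1=\theta_n=+1$; (d) $\pi(1)=\pi(n)-1$ and $\theta_1=\theta_n=-1$. $T$ is without fake discontinuities if none of (a)–(d) occurs. $T$ is transitive if some orbit $\{T^m(p): m\in\mathbb{Z},\ p\in\mathrm{Dom}(T^m)\}$ is dense in $[0,\ell]$. *)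

theory Defs
  imports "HOL-Analysis.Analysis"
begin

definition dom_int :: "(nat \<Rightarrow> real) \<Rightarrow> nat \<Rightarrow> real set" where
  "dom_int a i = {a (i - 1)<..<a i}"

definition iet_dom :: "nat \<Rightarrow> (nat \<Rightarrow> real) \<Rightarrow> real set" where
  "iet_dom n a = (\<Union>i\<in>{1..n}. dom_int a i)"

text \<open>T is an n-IET of [0,l] with partition a (T is only relevant on iet_dom n a).
  Non-extendability: at no interior partition point do the one-sided limits agree.\<close>

definition is_IET :: "nat \<Rightarrow> real \<Rightarrow> (nat \<Rightarrow> real) \<Rightarrow> (real \<Rightarrow> real) \<Rightarrow> bool" where
  "is_IET n l a T \<longleftrightarrow>
     n \<ge> 1 \<and> a 0 = 0 \<and> a n = l \<and> (\<forall>i<n. a i < a (i + 1)) \<and>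
     (\<forall>i\<in>{1..n}. \<forall>x\<in>dom_int a i. \<forall>y\<in>dom_int a i. \<bar>T x - T y\<bar> = \<bar>x - y\<bar>) \<and>
     inj_on T (iet_dom n a) \<and> T ` iet_dom n a \<subseteq> {0..l} \<and>
     (\<forall>i\<in>{1..n-1}. \<not> (\<exists>y. (T \<longlongrightarrow> y) (at_left (a i)) \<and> (T \<longlongrightarrow> y) (at_right (a i))))"

definition iet_theta :: "(nat \<Rightarrow> real) \<Rightarrow> (real \<Rightarrow> real) \<Rightarrow> nat \<Rightarrow> int" where
  "iet_theta a T i =
     (if \<forall>x\<in>dom_int a i. \<forall>y\<in>dom_int a i. x < y \<longrightarrow> T x < T y then 1 else -1)"

text \<open>Permutation: T(I_i) = J_(pi i), where J_1,...,J_n are the range intervals ordered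
  left to right; pi i is the rank of T(I_i) (compared via images of midpoints).\<close>

definition iet_mid :: "(nat \<Rightarrow> real) \<Rightarrow> nat \<Rightarrow> real" where
  "iet_mid a i = (a (i - 1) + a i) / 2"

definition iet_pi :: "nat \<Rightarrow> (nat \<Rightarrow> real) \<Rightarrow> (real \<Rightarrow> real) \<Rightarrow> nat \<Rightarrow> nat" where
  "iet_pi n a T i = card {j\<in>{1..n}. T (iet_mid a j) < T (iet_mid a i)} + 1"

definition num_flips :: "nat \<Rightarrow> (nat \<Rightarrow> real) \<Rightarrow> (real \<Rightarrow> real) \<Rightarrow> nat" where
  "num_flips n a T = card {i\<in>{1..n}. iet_theta a T i = -1}"

text \<open>Number of occurrences of the configurations (a)-(d).  T has a fake discontinuity iff
  this count is exactly 1, and is without fake discontinuities iff it is 0.\<close>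

definition fake_count :: "nat \<Rightarrow> (nat \<Rightarrow> real) \<Rightarrow> (real \<Rightarrow> real) \<Rightarrow> nat" where
  "fake_count n a T =
     (let p = iet_pi n a T; th = iet_theta a T in
        card {i\<in>{1..n-1}. p i = n \<and> p (i + 1) = 1 \<and> th i = 1 \<and> th (i + 1) = 1}
      + card {i\<in>{1..n-1}. p i = 1 \<and> p (i + 1) = n \<and> th i = -1 \<and> th (i + 1) = -1}
      + (if p 1 = p n + 1 \<and> th 1 = 1 \<and> th n = 1 then 1 else 0)
      + (if p 1 + 1 = p n \<and> th 1 = -1 \<and> th n = -1 then 1 else 0))"

definition has_fake_discontinuity :: "nat \<Rightarrow> (nat \<Rightarrow> real) \<Rightarrow> (real \<Rightarrow> real) \<Rightarrow> bool" where
  "has_fake_discontinuity n a T \<longleftrightarrow> fake_count n a T = 1"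

definition no_fake_discontinuity :: "nat \<Rightarrow> (nat \<Rightarrow> real) \<Rightarrow> (real \<Rightarrow> real) \<Rightarrow> bool" where
  "no_fake_discontinuity n a T \<longleftrightarrow> fake_count n a T = 0"

text \<open>Orbit: forward iterates T^k p (p, Tp, ..., T^(k-1) p all in the domain) and backward
  iterates q with T^k q = p (q, ..., T^(k-1) q in the domain), i.e. q = T^(-k) p.\<close>

definition iter_ok :: "real set \<Rightarrow> (real \<Rightarrow> real) \<Rightarrow> real \<Rightarrow> nat \<Rightarrow> bool" where
  "iter_ok D T x k \<longleftrightarrow> (\<forall>j<k. (T ^^ j) x \<in> D)"

definition iet_orbit :: "nat \<Rightarrow> (nat \<Rightarrow> real) \<Rightarrow> (real \<Rightarrow> real) \<Rightarrow> real \<Rightarrow> real set" where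
  "iet_orbit n a T p =
     {(T ^^ k) p | k. iter_ok (iet_dom n a) T p k}
     \<union> {q. \<exists>k. iter_ok (iet_dom n a) T q k \<and> (T ^^ k) q = p}"

definition iet_transitive :: "nat \<Rightarrow> real \<Rightarrow> (nat \<Rightarrow> real) \<Rightarrow> (real \<Rightarrow> real) \<Rightarrow> bool" where
  "iet_transitive n l a T \<longleftrightarrow>
     (\<exists>p\<in>{0..l}. {0..l} \<subseteq> closure (iet_orbit n a T p))"

end

theory Submission
  imports Defs
begin


lemma exists_irrat: "\<exists>c::real. c \<notin> \<rat> \<and> 0 < c \<and> c < 1/2"
proof -
  have "uncountable {0<..<1/2::real}" by (simp add: uncountable_open_interval)
  then have "\<not> {0<..<1/2::real} \<subseteq> \<rat>" using countable_rat countable_subset by blast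
  then show ?thesis by auto
qed

definition rot :: "real \<Rightarrow> real \<Rightarrow> real" where
  "rot c x = (if x + c < 1 then x + c else x + c - 1)"

lemma orbit_generic:
  fixes T :: "real \<Rightarrow> real" and m :: nat and cc ss :: "nat \<Rightarrow> real" and D :: "real set"
  assumes c: "c \<notin> \<rat>" "0 < c" "c < 1"
  and m: "m > 0"
  and ss: "\<And>j. j < m \<Longrightarrow> \<bar>ss j\<bar> = 1"
  and step: "\<And>x j. 0 < x \<Longrightarrow> x < 1 \<Longrightarrow> x + c \<noteq> 1 \<Longrightarrow> j < m \<Longrightarrow>
        (T ^^ j) (b + x) = cc j + ss j * x \<and> cc j + ss j * x \<in> D"
  and ret: "\<And>x. 0 < x \<Longrightarrow> x < 1 \<Longrightarrow> x + c \<noteq> 1 \<Longrightarrow> (T ^^ m) (b + x) = b + rot c x"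
  and j: "j < m" and y: "0 \<le> y" "y \<le> 1"
  shows "cc j + ss j * y \<in> closure {(T ^^ k) (b + c) | k. iter_ok D T (b + c) k}"
proof -
  define x where "x k = frac (real (Suc k) * c)" for k
  have xnz: "x k \<noteq> 0" for k
  proof
    assume "x k = 0"
    then have "real (Suc k) * c \<in> \<int>" by (simp add: x_def)
    then obtain z where z: "real (Suc k) * c = of_int z" by (auto elim: Ints_cases)
    then have "c = of_int z / real (Suc k)" by (simp add: field_simps)
    then have "c \<in> \<rat>" by simp
    with c show False by simp
  qed
  have fc: "frac c = c" using c by (simp add: frac_eq)
  have xs: "x (Suc k) = rot c (x k)" for k
  proof -
    have "x (Suc k) = frac (real (Suc k) * c + c)" by (simp add: x_def algebra_simps)
    also have "\<dots> = rot c (x k)" unfolding frac_add fc rot_def x_def by simp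
    finally show ?thesis .
  qed
  have xr: "0 < x k \<and> x k < 1 \<and> x k + c \<noteq> 1" for k
  proof -
    have "x (Suc k) \<noteq> 0" by (rule xnz)
    then have "x k + c \<noteq> 1" by (simp add: xs rot_def split: if_splits)
    moreover have "0 < x k" using xnz[of k] frac_ge_0[of "real (Suc k) * c"] by (simp add: x_def)
    moreover have "x k < 1" by (simp add: x_def frac_lt_1)
    ultimately show ?thesis by simp
  qed
  have x0: "x 0 = c" using fc by (simp add: x_def)
  have ind: "(T ^^ (m * k)) (b + c) = b + x k \<and> iter_ok D T (b + c) (m * k)" for k
  proof (induction k)
    case 0 then show ?case using x0 by (simp add: iter_ok_def)
  next
    case (Suc k)
    have e: "(T ^^ (m * k + i)) (b + c) = (T ^^ i) (b + x k)" for i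
    proof -
      have "(T ^^ (m * k + i)) (b + c) = (T ^^ i) ((T ^^ (m * k)) (b + c))"
        by (subst add.commute) (simp add: funpow_add)
      then show ?thesis using Suc.IH by simp
    qed
    have "(T ^^ (m * Suc k)) (b + c) = (T ^^ m) (b + x k)" 
    proof -
      have "m * Suc k = m * k + m" by simp
      then show ?thesis using e[of m] by (simp only:)
    qed
    also have "\<dots> = b + x (Suc k)" using ret xr[of k] xs by simp
    finally have 1: "(T ^^ (m * Suc k)) (b + c) = b + x (Suc k)" .
    have "iter_ok D T (b + c) (m * Suc k)"
      unfolding iter_ok_def
    proof (intro allI impI)
      fix i assume i: "i < m * Suc k"
      show "(T ^^ i) (b + c) \<in> D"
      proof (cases "i < m * k")
        case True then show ?thesis using Suc.IH by (simp add: iter_ok_def)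
      next
        case False
        define i' where "i' = i - m * k"
        have "i = m * k + i'" using False by (simp add: i'_def)
        moreover have "i' < m" using i False by (simp add: i'_def)
        ultimately show ?thesis using e[of i'] step[of "x k" i'] xr[of k] by simp
      qed
    qed
    with 1 show ?case by simp
  qed
  have mem: "cc j + ss j * x k \<in> {(T ^^ k) (b + c) | k. iter_ok D T (b + c) k}" for k
  proof -
    have "(T ^^ (m * k + j)) (b + c) = cc j + ss j * x k"
    proof -
      have "(T ^^ (m * k + j)) (b + c) = (T ^^ j) ((T ^^ (m * k)) (b + c))"
        by (subst add.commute) (simp add: funpow_add)
      then show ?thesis using ind[of k] step[of "x k" j] xr[of k] j by simp
    qed
    moreover have "iter_ok D T (b + c) (m * k + j)"
    proof -
      have le: "m * k + j \<le> m * Suc k" using j by simp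
      have "\<forall>i < m * Suc k. (T ^^ i) (b + c) \<in> D" using ind[of "Suc k"] unfolding iter_ok_def by blast
      then show ?thesis unfolding iter_ok_def using le by (meson less_le_trans)
    qed
    ultimately show ?thesis by (intro CollectI exI[where x="m*k+j"]) simp
  qed
  show ?thesis
    unfolding closure_approachable
  proof (intro allI impI)
    fix e :: real assume e: "e > 0"
    obtain n where n: "n > 0" "\<bar>frac (real n * c) - y\<bar> < e"
      using Kronecker_approx_1_explicit[OF c(1) y e] by blast
    then obtain k where k: "n = Suc k" using gr0_implies_Suc by blast
    have "dist (cc j + ss j * x k) (cc j + ss j * y) = \<bar>ss j\<bar> * \<bar>x k - y\<bar>"
      by (simp add: dist_real_def abs_mult[symmetric] algebra_simps)
    also have "\<dots> < e" using ss[OF j] n k by (simp add: x_def)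
    finally show "\<exists>z\<in>{(T ^^ k) (b + c) | k. iter_ok D T (b + c) k}. dist z (cc j + ss j * y) < e"
      using mem by blast
  qed
qed



lemma lim_left_aff:
  fixes T :: "real \<Rightarrow> real"
  assumes "d < p" "\<And>x. d < x \<Longrightarrow> x < p \<Longrightarrow> T x = u + s * x"
  shows "(T \<longlongrightarrow> u + s * p) (at_left p)"
proof -
  have "((\<lambda>x. u + s * x) \<longlongrightarrow> u + s * p) (at_left p)"
    by (auto intro!: tendsto_eq_intros)
  moreover have "eventually (\<lambda>x. u + s * x = T x) (at_left p)"
    using eventually_at_left_real[OF assms(1)] by eventually_elim (use assms in auto)
  ultimately show ?thesis by (rule Lim_transform_eventually)
qed

lemma lim_right_aff:
  fixes T :: "real \<Rightarrow> real"
  assumes "p < e" "\<And>x. p < x \<Longrightarrow> x < e \<Longrightarrow> T x = u + s * x"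
  shows "(T \<longlongrightarrow> u + s * p) (at_right p)"
proof -
  have "((\<lambda>x. u + s * x) \<longlongrightarrow> u + s * p) (at_right p)"
    by (auto intro!: tendsto_eq_intros)
  moreover have "eventually (\<lambda>x. u + s * x = T x) (at_right p)"
    using eventually_at_right_real[OF assms(1)] by eventually_elim (use assms in auto)
  ultimately show ?thesis by (rule Lim_transform_eventually)
qed

definition lo :: "(nat \<Rightarrow> real) \<Rightarrow> (nat \<Rightarrow> real) \<Rightarrow> (nat \<Rightarrow> real) \<Rightarrow> nat \<Rightarrow> real" where
  "lo a u s i = min (u i + s i * a (i - 1)) (u i + s i * a i)"
definition hi :: "(nat \<Rightarrow> real) \<Rightarrow> (nat \<Rightarrow> real) \<Rightarrow> (nat \<Rightarrow> real) \<Rightarrow> nat \<Rightarrow> real" where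
  "hi a u s i = max (u i + s i * a (i - 1)) (u i + s i * a i)"



lemma is_IET_generic:
  fixes T :: "real \<Rightarrow> real"
  assumes n: "n \<ge> 1" and a0: "a 0 = 0" and an: "a n = l" and mono: "\<forall>i<n. a i < a (i + 1)"
  and aff: "\<forall>i\<in>{1..n}. \<forall>x\<in>dom_int a i. T x = u i + s i * x"
  and s: "\<forall>i\<in>{1..n}. s i = 1 \<or> s i = -1"
  and disj: "\<forall>i\<in>{1..n}. \<forall>j\<in>{1..n}. i < j \<longrightarrow> hi a u s i \<le> lo a u s j \<or> hi a u s j \<le> lo a u s i"
  and rng: "\<forall>i\<in>{1..n}. 0 \<le> lo a u s i \<and> hi a u s i \<le> l"
  and ne: "\<forall>i\<in>{1..n-1}. u i + s i * a i \<noteq> u (i+1) + s (i+1) * a i"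
  shows "is_IET n l a T"
proof -
  have lt: "a (i - 1) < a i" if "i \<in> {1..n}" for i
    using mono[rule_format, of "i - 1"] that by auto
  have img: "lo a u s i < T x \<and> T x < hi a u s i" if i: "i \<in> {1..n}" and x: "x \<in> dom_int a i" for i x
  proof -
    have "T x = u i + s i * x" using aff i x by blast
    moreover have "a (i - 1) < x" "x < a i" using x by (auto simp: dom_int_def)
    moreover have "s i = 1 \<or> s i = -1" using s i by blast
    ultimately show ?thesis unfolding lo_def hi_def by (elim disjE) auto
  qed
  have iso: "\<forall>i\<in>{1..n}. \<forall>x\<in>dom_int a i. \<forall>y\<in>dom_int a i. \<bar>T x - T y\<bar> = \<bar>x - y\<bar>"
  proof (intro ballI)
    fix i x y assume i: "i \<in> {1..n}" and x: "x \<in> dom_int a i" and y: "y \<in> dom_int a i"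
    have "T x - T y = s i * (x - y)" using aff i x y by (simp add: algebra_simps)
    moreover have "s i = 1 \<or> s i = -1" using s i by blast
    ultimately show "\<bar>T x - T y\<bar> = \<bar>x - y\<bar>" by (elim disjE) (auto simp: abs_minus_commute)
  qed
  have inj: "inj_on T (iet_dom n a)"
  proof (rule inj_onI)
    fix x y assume "x \<in> iet_dom n a" "y \<in> iet_dom n a" and e: "T x = T y"
    then obtain i j where i: "i \<in> {1..n}" "x \<in> dom_int a i" and j: "j \<in> {1..n}" "y \<in> dom_int a j"
      by (auto simp: iet_dom_def)
    consider "i = j" | "i < j" | "j < i" by linarith
    then show "x = y"
    proof cases
      case 1
      then have "u i + s i * x = u i + s i * y" using aff i j e by auto
      moreover have "s i = 1 \<or> s i = -1" using s i by blast
      ultimately show ?thesis by (elim disjE) auto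
    next
      case 2
      then have "hi a u s i \<le> lo a u s j \<or> hi a u s j \<le> lo a u s i" using disj i j by blast
      then have False using img[OF i] img[OF j] e by (elim disjE) linarith+
      then show ?thesis ..
    next
      case 3
      then have "hi a u s j \<le> lo a u s i \<or> hi a u s i \<le> lo a u s j" using disj i j by blast
      then have False using img[OF i] img[OF j] e by (elim disjE) linarith+
      then show ?thesis ..
    qed
  qed
  have imgl: "T ` iet_dom n a \<subseteq> {0..l}"
  proof
    fix z assume "z \<in> T ` iet_dom n a"
    then obtain i x where "i \<in> {1..n}" "x \<in> dom_int a i" "z = T x" by (auto simp: iet_dom_def)
    then show "z \<in> {0..l}" using img[of i x] rng by (metis atLeastAtMost_iff less_eq_real_def order.strict_trans1 order_less_le_trans)
  qed
  have next_: "\<forall>i\<in>{1..n-1}. \<not> (\<exists>y. (T \<longlongrightarrow> y) (at_left (a i)) \<and> (T \<longlongrightarrow> y) (at_right (a i)))"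
  proof (intro ballI notI)
    fix i assume i: "i \<in> {1..n-1}" and ex: "\<exists>y. (T \<longlongrightarrow> y) (at_left (a i)) \<and> (T \<longlongrightarrow> y) (at_right (a i))"
    have i1: "i \<in> {1..n}" and i2: "i + 1 \<in> {1..n}" using i by auto
    have L: "(T \<longlongrightarrow> u i + s i * a i) (at_left (a i))"
      by (rule lim_left_aff[OF lt[OF i1]]) (use aff i1 in \<open>auto simp: dom_int_def\<close>)
    have R: "(T \<longlongrightarrow> u (i+1) + s (i+1) * a i) (at_right (a i))"
      by (rule lim_right_aff[where e="a (i+1)"]) (use lt[OF i2] aff i2 in \<open>auto simp: dom_int_def\<close>)
    from ex obtain y where "(T \<longlongrightarrow> y) (at_left (a i))" "(T \<longlongrightarrow> y) (at_right (a i))" by blast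
    with L R have "u i + s i * a i = u (i+1) + s (i+1) * a i"
      using tendsto_unique[OF trivial_limit_at_left_real] tendsto_unique[OF trivial_limit_at_right_real]
      by metis
    with ne i show False by blast
  qed
  show ?thesis unfolding is_IET_def using n a0 an mono iso inj imgl next_ by blast
qed

lemma theta_generic:
  assumes "a (i - 1) < a i" "\<forall>x\<in>dom_int a i. T x = u + s * x" "s = 1 \<or> s = -1"
  shows "iet_theta a T i = (if s = 1 then 1 else -1)"
proof (cases "s = 1")
  case True then show ?thesis using assms by (auto simp: iet_theta_def)
next
  case False
  then have s: "s = -1" using assms by auto
  define x where "x = (3 * a (i - 1) + a i) / 4"
  define y where "y = (a (i - 1) + 3 * a i) / 4"
  have "x \<in> dom_int a i" "y \<in> dom_int a i" "x < y" using assms(1) by (auto simp: dom_int_def x_def y_def)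
  moreover have "\<not> T x < T y" using calculation assms(2) s by auto
  ultimately have "iet_theta a T i = -1" unfolding iet_theta_def by (metis (no_types, lifting))
  then show ?thesis using False by simp
qed

lemma mid_in: "a (i - 1) < a i \<Longrightarrow> iet_mid a i \<in> dom_int a i"
  by (auto simp: iet_mid_def dom_int_def)

lemma card_filter: "finite A \<Longrightarrow> card {j\<in>A. P j} = (\<Sum>j\<in>A. if P j then 1 else 0)"
  by (simp add: sum.If_cases Collect_conj_eq Int_commute)

lemma transitive_generic:
  fixes T :: "real \<Rightarrow> real" and m :: nat and cc ss :: "nat \<Rightarrow> real"
  assumes c: "c \<notin> \<rat>" "0 < c" "c < 1"
  and m: "m > 0"
  and ss: "\<And>j. j < m \<Longrightarrow> \<bar>ss j\<bar> = 1"
  and step: "\<And>x j. 0 < x \<Longrightarrow> x < 1 \<Longrightarrow> x + c \<noteq> 1 \<Longrightarrow> j < m \<Longrightarrow>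
        (T ^^ j) (b + x) = cc j + ss j * x \<and> cc j + ss j * x \<in> iet_dom n a"
  and ret: "\<And>x. 0 < x \<Longrightarrow> x < 1 \<Longrightarrow> x + c \<noteq> 1 \<Longrightarrow> (T ^^ m) (b + x) = b + rot c x"
  and p: "0 \<le> b + c" "b + c \<le> l"
  and cover: "\<And>z. 0 \<le> z \<Longrightarrow> z \<le> l \<Longrightarrow> \<exists>j<m. \<exists>y. 0 \<le> y \<and> y \<le> 1 \<and> z = cc j + ss j * y"
  shows "iet_transitive n l a T"
  unfolding iet_transitive_def
proof (intro bexI[where x="b + c"] subsetI)
  show "b + c \<in> {0..l}" using p by simp
  fix z assume "z \<in> {0..l}"
  then obtain j y where j: "j < m" "0 \<le> y" "y \<le> 1" "z = cc j + ss j * y" using cover by force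
  have "z \<in> closure {(T ^^ k) (b + c) | k. iter_ok (iet_dom n a) T (b + c) k}"
    using orbit_generic[OF c m ss step ret j(1) j(2) j(3)] j(4) by blast
  moreover have "{(T ^^ k) (b + c) | k. iter_ok (iet_dom n a) T (b + c) k} \<subseteq> iet_orbit n a T (b + c)"
    unfolding iet_orbit_def by blast
  ultimately show "z \<in> closure (iet_orbit n a T (b + c))" using closure_mono by blast
qed



lemma set14: "{1..4::nat} = {1,2,3,4}" by auto
lemma set13: "{1..3::nat} = {1,2,3}" by auto
lemma set14m: "{1..4-1::nat} = {1,2,3}" by auto
lemma cf4: "card {j\<in>{1..4::nat}. P j} = (if P 1 then 1 else 0) + (if P 2 then 1 else 0) + (if P 3 then 1 else 0) + (if P 4 then 1 else 0)"
  by (subst card_filter, simp, unfold set14, simp)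
lemma cf4m: "card {j\<in>{1..4-1::nat}. P j} = (if P 1 then 1 else 0) + (if P 2 then 1 else 0) + (if P 3 then 1 else 0)"
  by (subst card_filter, simp, unfold set14m, simp)
lemma set15: "{1..5::nat} = {1,2,3,4,5}" by auto
lemma set15m: "{1..5-1::nat} = {1,2,3,4}" by auto
lemma cf5: "card {j\<in>{1..5::nat}. P j} = (if P 1 then 1 else 0) + (if P 2 then 1 else 0) + (if P 3 then 1 else 0) + (if P 4 then 1 else 0) + (if P 5 then 1 else 0)"
  by (subst card_filter, simp, unfold set15, simp)
lemma cf5m: "card {j\<in>{1..5-1::nat}. P j} = (if P 1 then 1 else 0) + (if P 2 then 1 else 0) + (if P 3 then 1 else 0) + (if P 4 then 1 else 0)"
  by (subst card_filter, simp, unfold set15m, simp)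
lemma all5: "(\<forall>i<5::nat. P i) = (P 0 \<and> P 1 \<and> P 2 \<and> P 3 \<and> P 4)" by (auto simp: numeral_eq_Suc less_Suc_eq)
lemma all4: "(\<forall>i<4::nat. P i) = (P 0 \<and> P 1 \<and> P 2 \<and> P 3)" by (auto simp: numeral_eq_Suc less_Suc_eq)
lemma ex4: "(\<exists>i<4::nat. P i) = (P 0 \<or> P 1 \<or> P 2 \<or> P 3)" by (auto simp: numeral_eq_Suc less_Suc_eq)

lemma cov_pos: "j < m \<Longrightarrow> ss j = 1 \<Longrightarrow> cc j \<le> z \<Longrightarrow> z \<le> cc j + 1 \<Longrightarrow> \<exists>j<m. \<exists>y. 0 \<le> y \<and> y \<le> 1 \<and> (z::real) = cc j + ss j * y"
  by (intro exI[of _ j] conjI exI[of _ "z - cc j"]) auto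
lemma cov_neg: "j < m \<Longrightarrow> ss j = -1 \<Longrightarrow> cc j - 1 \<le> z \<Longrightarrow> z \<le> cc j \<Longrightarrow> \<exists>j<m. \<exists>y. 0 \<le> y \<and> y \<le> 1 \<and> (z::real) = cc j + ss j * y"
  by (intro exI[of _ j] conjI exI[of _ "cc j - z"]) auto

definition "a1 c = (\<lambda>i. [0, 2, 3 - c, 3, 4::real] ! i)"
definition "u1 c = (\<lambda>i. [0, 4, c - 2, c - 3, -2::real] ! i)"
definition "s1 = (\<lambda>i. [0, -1, 1, 1, 1::real] ! i)"
definition "T1 c x = (if x < 2 then 4 - x else if x < 3 - c then x + c - 2 else if x < 3 then x + c - 3 else (x::real) - 2)"

lemma iet_ex1:
  fixes c :: real
  assumes c: "c \<notin> \<rat>" "0 < c" "c < 1/2"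
  shows "is_IET 4 4 (a1 c) (T1 c) \<and> iet_transitive 4 4 (a1 c) (T1 c) \<and>
         num_flips 4 (a1 c) (T1 c) = 1 \<and> no_fake_discontinuity 4 (a1 c) (T1 c)"
proof -
  have aff: "\<forall>i\<in>{1..4}. \<forall>x\<in>dom_int (a1 c) i. T1 c x = u1 c i + s1 i * x"
    unfolding set14 using c by (auto simp: dom_int_def a1_def u1_def s1_def T1_def)
  have s: "\<forall>i\<in>{1..4}. s1 i = 1 \<or> s1 i = -1" unfolding set14 by (simp add: s1_def)
  have mono: "\<forall>i<4. a1 c i < a1 c (i + 1)" using c by (simp add: all4 a1_def)
  have IET: "is_IET 4 4 (a1 c) (T1 c)"
  proof (rule is_IET_generic[OF _ _ _ mono aff s])
    show "\<forall>i\<in>{1..4}. \<forall>j\<in>{1..4}. i < j \<longrightarrow> hi (a1 c) (u1 c) s1 i \<le> lo (a1 c) (u1 c) s1 j \<or>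
          hi (a1 c) (u1 c) s1 j \<le> lo (a1 c) (u1 c) s1 i"
      using c unfolding set14 by (simp add: hi_def lo_def a1_def u1_def s1_def)
    show "\<forall>i\<in>{1..4}. 0 \<le> lo (a1 c) (u1 c) s1 i \<and> hi (a1 c) (u1 c) s1 i \<le> 4"
      using c unfolding set14 by (simp add: hi_def lo_def a1_def u1_def s1_def)
    show "\<forall>i\<in>{1..4 - 1}. u1 c i + s1 i * a1 c i \<noteq> u1 c (i + 1) + s1 (i + 1) * a1 c i"
      unfolding set14m using c by (simp add: a1_def u1_def s1_def)
  qed (simp_all add: a1_def)
  have lt: "a1 c (i - 1) < a1 c i" if "i \<in> {1..4}" for i
    using mono[rule_format, of "i - 1"] that by auto
  have th: "iet_theta (a1 c) (T1 c) i = (if s1 i = 1 then 1 else -1)" if "i \<in> {1..4}" for i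
    using theta_generic[OF lt[OF that]] aff s that by blast
  have th1: "iet_theta (a1 c) (T1 c) 1 = -1" "iet_theta (a1 c) (T1 c) 2 = 1" "iet_theta (a1 c) (T1 c) 3 = 1" "iet_theta (a1 c) (T1 c) 4 = 1"
    using th[of 1] th[of 2] th[of 3] th[of 4] by (simp_all add: s1_def)
  have Tm: "T1 c (iet_mid (a1 c) 1) = 3" "T1 c (iet_mid (a1 c) 2) = (1 + c) / 2" "T1 c (iet_mid (a1 c) 3) = c / 2" "T1 c (iet_mid (a1 c) 4) = 3 / 2"
    using c by (simp_all add: T1_def iet_mid_def a1_def field_simps)
  have pi: "iet_pi 4 (a1 c) (T1 c) 1 = 4" "iet_pi 4 (a1 c) (T1 c) 2 = 2" "iet_pi 4 (a1 c) (T1 c) 3 = 1" "iet_pi 4 (a1 c) (T1 c) 4 = 3"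
    unfolding iet_pi_def cf4 using c by (simp_all add: Tm Tm(1)[unfolded One_nat_def] field_simps)
  have flips: "num_flips 4 (a1 c) (T1 c) = 1"
    unfolding num_flips_def cf4 by (simp add: th1 th1(1)[unfolded One_nat_def])
  have fake: "no_fake_discontinuity 4 (a1 c) (T1 c)"
    unfolding no_fake_discontinuity_def fake_count_def Let_def
    unfolding cf4m by (simp add: th1 pi th1(1)[unfolded One_nat_def] pi(1)[unfolded One_nat_def])
  have dom: "iet_dom 4 (a1 c) = {0<..<2} \<union> {2<..<3-c} \<union> {3-c<..<3} \<union> {3<..<4}"
    unfolding iet_dom_def set14 by (simp add: dom_int_def a1_def Un_ac)
  have tr: "iet_transitive 4 4 (a1 c) (T1 c)"
  proof (rule transitive_generic[where m=4 and b=0 and cc="\<lambda>j. [0,4,2,2] ! j" and ss="\<lambda>j. [1,-1,-1,1] ! j"])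
    show "c \<notin> \<rat>" "0 < c" "c < 1" using c by auto
    show "\<And>j. j < 4 \<Longrightarrow> \<bar>[1,-1,-1,1::real] ! j\<bar> = 1" by (auto simp: numeral_eq_Suc less_Suc_eq)
    show "\<And>x. 0 < x \<Longrightarrow> x < 1 \<Longrightarrow> x + c \<noteq> 1 \<Longrightarrow> (T1 c ^^ 4) (0 + x) = 0 + rot c x"
      using c by (auto simp: numeral_eq_Suc T1_def rot_def)
    show "\<And>x j. 0 < x \<Longrightarrow> x < 1 \<Longrightarrow> x + c \<noteq> 1 \<Longrightarrow> j < 4 \<Longrightarrow>
        (T1 c ^^ j) (0 + x) = [0,4,2,2] ! j + [1,-1,-1,1] ! j * x \<and> [0,4,2,2] ! j + [1,-1,-1,1] ! j * x \<in> iet_dom 4 (a1 c)"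
      unfolding dom using c by (auto simp: numeral_eq_Suc less_Suc_eq T1_def)
    show "\<And>z. 0 \<le> z \<Longrightarrow> z \<le> 4 \<Longrightarrow> \<exists>j<4. \<exists>y. 0 \<le> y \<and> y \<le> 1 \<and> (z::real) = [0,4,2,2] ! j + [1,-1,-1,1] ! j * y"
    proof -
      fix z :: real assume z: "0 \<le> z" "z \<le> 4"
      show "\<exists>j<4. \<exists>y. 0 \<le> y \<and> y \<le> 1 \<and> (z::real) = [0,4,2,2] ! j + [1,-1,-1,1] ! j * y"
      proof -
        consider "z \<le> 1" | "1 \<le> z" "z \<le> 2" | "2 \<le> z" "z \<le> 3" | "3 \<le> z" by linarith
        then show ?thesis
        proof cases
          case 1 then show ?thesis using z by (intro cov_pos[where j=0]) simp_all
        next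
          case 2 then show ?thesis using z by (intro cov_neg[where j=2]) simp_all
        next
          case 3 then show ?thesis using z by (intro cov_pos[where j=3]) simp_all
        next
          case 4 then show ?thesis using z by (intro cov_neg[where j=1]) simp_all
        qed
      qed
    qed
  qed (use c in auto)
  show ?thesis using IET tr flips fake by blast
qed

definition "a2 c = (\<lambda>i. [0, 1, 2, 3 - c, 3::real] ! i)"
definition "u2 c = (\<lambda>i. [0, 2, 4, c - 2, c - 3::real] ! i)"
definition "s2 = (\<lambda>i. [0, -1, -1, 1, 1::real] ! i)"
definition "T2 c x = (if x < 1 then 2 - x else if x < 2 then 4 - x else if x < 3 - c then x + c - 2 else (x::real) + c - 3)"

lemma iet_ex2:
  fixes c :: real
  assumes c: "c \<notin> \<rat>" "0 < c" "c < 1/2"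
  shows "is_IET 4 3 (a2 c) (T2 c) \<and> iet_transitive 4 3 (a2 c) (T2 c) \<and>
         num_flips 4 (a2 c) (T2 c) = 2 \<and> no_fake_discontinuity 4 (a2 c) (T2 c)"
proof -
  have aff: "\<forall>i\<in>{1..4}. \<forall>x\<in>dom_int (a2 c) i. T2 c x = u2 c i + s2 i * x"
    unfolding set14 using c by (auto simp: dom_int_def a2_def u2_def s2_def T2_def)
  have s: "\<forall>i\<in>{1..4}. s2 i = 1 \<or> s2 i = -1" unfolding set14 by (simp add: s2_def)
  have mono: "\<forall>i<4. a2 c i < a2 c (i + 1)" using c by (simp add: all4 a2_def)
  have IET: "is_IET 4 3 (a2 c) (T2 c)"
  proof (rule is_IET_generic[OF _ _ _ mono aff s])
    show "\<forall>i\<in>{1..4}. \<forall>j\<in>{1..4}. i < j \<longrightarrow> hi (a2 c) (u2 c) s2 i \<le> lo (a2 c) (u2 c) s2 j \<or>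
          hi (a2 c) (u2 c) s2 j \<le> lo (a2 c) (u2 c) s2 i"
      using c unfolding set14 by (simp add: hi_def lo_def a2_def u2_def s2_def)
    show "\<forall>i\<in>{1..4}. 0 \<le> lo (a2 c) (u2 c) s2 i \<and> hi (a2 c) (u2 c) s2 i \<le> 3"
      using c unfolding set14 by (simp add: hi_def lo_def a2_def u2_def s2_def)
    show "\<forall>i\<in>{1..4 - 1}. u2 c i + s2 i * a2 c i \<noteq> u2 c (i + 1) + s2 (i + 1) * a2 c i"
      unfolding set14m using c by (simp add: a2_def u2_def s2_def)
  qed (simp_all add: a2_def)
  have lt: "a2 c (i - 1) < a2 c i" if "i \<in> {1..4}" for i
    using mono[rule_format, of "i - 1"] that by auto
  have th: "iet_theta (a2 c) (T2 c) i = (if s2 i = 1 then 1 else -1)" if "i \<in> {1..4}" for i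
    using theta_generic[OF lt[OF that]] aff s that by blast
  have th1: "iet_theta (a2 c) (T2 c) 1 = -1" "iet_theta (a2 c) (T2 c) 2 = -1" "iet_theta (a2 c) (T2 c) 3 = 1" "iet_theta (a2 c) (T2 c) 4 = 1"
    using th[of 1] th[of 2] th[of 3] th[of 4] by (simp_all add: s2_def)
  have Tm: "T2 c (iet_mid (a2 c) 1) = 3 / 2" "T2 c (iet_mid (a2 c) 2) = 5 / 2" "T2 c (iet_mid (a2 c) 3) = (1 + c) / 2" "T2 c (iet_mid (a2 c) 4) = c / 2"
    using c by (simp_all add: T2_def iet_mid_def a2_def field_simps)
  have pi: "iet_pi 4 (a2 c) (T2 c) 1 = 3" "iet_pi 4 (a2 c) (T2 c) 2 = 4" "iet_pi 4 (a2 c) (T2 c) 3 = 2" "iet_pi 4 (a2 c) (T2 c) 4 = 1"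
    unfolding iet_pi_def cf4 using c by (simp_all add: Tm Tm(1)[unfolded One_nat_def] field_simps)
  have flips: "num_flips 4 (a2 c) (T2 c) = 2"
    unfolding num_flips_def cf4 by (simp add: th1 th1(1)[unfolded One_nat_def])
  have fake: "no_fake_discontinuity 4 (a2 c) (T2 c)"
    unfolding no_fake_discontinuity_def fake_count_def Let_def
    unfolding cf4m by (simp add: th1 pi th1(1)[unfolded One_nat_def] pi(1)[unfolded One_nat_def])
  have dom: "iet_dom 4 (a2 c) = {0<..<1} \<union> {1<..<2} \<union> {2<..<3-c} \<union> {3-c<..<3}"
    unfolding iet_dom_def set14 by (simp add: dom_int_def a2_def Un_ac)
  have tr: "iet_transitive 4 3 (a2 c) (T2 c)"
  proof (rule transitive_generic[where m=3 and b=0 and cc="\<lambda>j. [0,2,2] ! j" and ss="\<lambda>j. [1,-1,1] ! j"])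
    show "c \<notin> \<rat>" "0 < c" "c < 1" using c by auto
    show "\<And>j. j < 3 \<Longrightarrow> \<bar>[1,-1,1::real] ! j\<bar> = 1" by (auto simp: numeral_eq_Suc less_Suc_eq)
    show "\<And>x. 0 < x \<Longrightarrow> x < 1 \<Longrightarrow> x + c \<noteq> 1 \<Longrightarrow> (T2 c ^^ 3) (0 + x) = 0 + rot c x"
      using c by (auto simp: numeral_eq_Suc T2_def rot_def)
    show "\<And>x j. 0 < x \<Longrightarrow> x < 1 \<Longrightarrow> x + c \<noteq> 1 \<Longrightarrow> j < 3 \<Longrightarrow>
        (T2 c ^^ j) (0 + x) = [0,2,2] ! j + [1,-1,1] ! j * x \<and> [0,2,2] ! j + [1,-1,1] ! j * x \<in> iet_dom 4 (a2 c)"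
      unfolding dom using c by (auto simp: numeral_eq_Suc less_Suc_eq T2_def)
    show "\<And>z. 0 \<le> z \<Longrightarrow> z \<le> 3 \<Longrightarrow> \<exists>j<3. \<exists>y. 0 \<le> y \<and> y \<le> 1 \<and> (z::real) = [0,2,2] ! j + [1,-1,1] ! j * y"
    proof -
      fix z :: real assume z: "0 \<le> z" "z \<le> 3"
      show "\<exists>j<3. \<exists>y. 0 \<le> y \<and> y \<le> 1 \<and> (z::real) = [0,2,2] ! j + [1,-1,1] ! j * y"
      proof -
        consider "z \<le> 1" | "1 \<le> z" "z \<le> 2" | "2 \<le> z" by linarith
        then show ?thesis
        proof cases
          case 1 then show ?thesis using z by (intro cov_pos[where j=0]) simp_all
        next
          case 2 then show ?thesis using z by (intro cov_neg[where j=1]) simp_all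
        next
          case 3 then show ?thesis using z by (intro cov_pos[where j=2]) simp_all
        qed
      qed
    qed
  qed (use c in auto)
  show ?thesis using IET tr flips fake by blast
qed

definition "a3 c = (\<lambda>i. [0, 1, 1 + c, 2, 3::real] ! i)"
definition "u3 c = (\<lambda>i. [0, 2, 3 + c, 4 + c, -2::real] ! i)"
definition "s3 = (\<lambda>i. [0, -1, -1, -1, 1::real] ! i)"
definition "T3 c x = (if x < 1 then 2 - x else if x < 1 + c then 3 + c - x else if x < 2 then 4 + c - x else (x::real) - 2)"

lemma iet_ex3:
  fixes c :: real
  assumes c: "c \<notin> \<rat>" "0 < c" "c < 1/2"
  shows "is_IET 4 3 (a3 c) (T3 c) \<and> iet_transitive 4 3 (a3 c) (T3 c) \<and>
         num_flips 4 (a3 c) (T3 c) = 3 \<and> no_fake_discontinuity 4 (a3 c) (T3 c)"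
proof -
  have aff: "\<forall>i\<in>{1..4}. \<forall>x\<in>dom_int (a3 c) i. T3 c x = u3 c i + s3 i * x"
    unfolding set14 using c by (auto simp: dom_int_def a3_def u3_def s3_def T3_def)
  have s: "\<forall>i\<in>{1..4}. s3 i = 1 \<or> s3 i = -1" unfolding set14 by (simp add: s3_def)
  have mono: "\<forall>i<4. a3 c i < a3 c (i + 1)" using c by (simp add: all4 a3_def)
  have IET: "is_IET 4 3 (a3 c) (T3 c)"
  proof (rule is_IET_generic[OF _ _ _ mono aff s])
    show "\<forall>i\<in>{1..4}. \<forall>j\<in>{1..4}. i < j \<longrightarrow> hi (a3 c) (u3 c) s3 i \<le> lo (a3 c) (u3 c) s3 j \<or>
          hi (a3 c) (u3 c) s3 j \<le> lo (a3 c) (u3 c) s3 i"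
      using c unfolding set14 by (simp add: hi_def lo_def a3_def u3_def s3_def)
    show "\<forall>i\<in>{1..4}. 0 \<le> lo (a3 c) (u3 c) s3 i \<and> hi (a3 c) (u3 c) s3 i \<le> 3"
      using c unfolding set14 by (simp add: hi_def lo_def a3_def u3_def s3_def)
    show "\<forall>i\<in>{1..4 - 1}. u3 c i + s3 i * a3 c i \<noteq> u3 c (i + 1) + s3 (i + 1) * a3 c i"
      unfolding set14m using c by (simp add: a3_def u3_def s3_def)
  qed (simp_all add: a3_def)
  have lt: "a3 c (i - 1) < a3 c i" if "i \<in> {1..4}" for i
    using mono[rule_format, of "i - 1"] that by auto
  have th: "iet_theta (a3 c) (T3 c) i = (if s3 i = 1 then 1 else -1)" if "i \<in> {1..4}" for i
    using theta_generic[OF lt[OF that]] aff s that by blast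
  have th1: "iet_theta (a3 c) (T3 c) 1 = -1" "iet_theta (a3 c) (T3 c) 2 = -1" "iet_theta (a3 c) (T3 c) 3 = -1" "iet_theta (a3 c) (T3 c) 4 = 1"
    using th[of 1] th[of 2] th[of 3] th[of 4] by (simp_all add: s3_def)
  have Tm: "T3 c (iet_mid (a3 c) 1) = 3 / 2" "T3 c (iet_mid (a3 c) 2) = (4 + c) / 2" "T3 c (iet_mid (a3 c) 3) = (5 + c) / 2" "T3 c (iet_mid (a3 c) 4) = 1 / 2"
    using c by (simp_all add: T3_def iet_mid_def a3_def field_simps)
  have pi: "iet_pi 4 (a3 c) (T3 c) 1 = 2" "iet_pi 4 (a3 c) (T3 c) 2 = 3" "iet_pi 4 (a3 c) (T3 c) 3 = 4" "iet_pi 4 (a3 c) (T3 c) 4 = 1"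
    unfolding iet_pi_def cf4 using c by (simp_all add: Tm Tm(1)[unfolded One_nat_def] field_simps)
  have flips: "num_flips 4 (a3 c) (T3 c) = 3"
    unfolding num_flips_def cf4 by (simp add: th1 th1(1)[unfolded One_nat_def])
  have fake: "no_fake_discontinuity 4 (a3 c) (T3 c)"
    unfolding no_fake_discontinuity_def fake_count_def Let_def
    unfolding cf4m by (simp add: th1 pi th1(1)[unfolded One_nat_def] pi(1)[unfolded One_nat_def])
  have dom: "iet_dom 4 (a3 c) = {0<..<1} \<union> {1<..<1+c} \<union> {1+c<..<2} \<union> {2<..<3}"
    unfolding iet_dom_def set14 by (simp add: dom_int_def a3_def Un_ac)
  have tr: "iet_transitive 4 3 (a3 c) (T3 c)"
  proof (rule transitive_generic[where m=3 and b=2 and cc="\<lambda>j. [2,0,2] ! j" and ss="\<lambda>j. [1,1,-1] ! j"])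
    show "c \<notin> \<rat>" "0 < c" "c < 1" using c by auto
    show "\<And>j. j < 3 \<Longrightarrow> \<bar>[1,1,-1::real] ! j\<bar> = 1" by (auto simp: numeral_eq_Suc less_Suc_eq)
    show "\<And>x. 0 < x \<Longrightarrow> x < 1 \<Longrightarrow> x + c \<noteq> 1 \<Longrightarrow> (T3 c ^^ 3) (2 + x) = 2 + rot c x"
      using c by (auto simp: numeral_eq_Suc T3_def rot_def)
    show "\<And>x j. 0 < x \<Longrightarrow> x < 1 \<Longrightarrow> x + c \<noteq> 1 \<Longrightarrow> j < 3 \<Longrightarrow>
        (T3 c ^^ j) (2 + x) = [2,0,2] ! j + [1,1,-1] ! j * x \<and> [2,0,2] ! j + [1,1,-1] ! j * x \<in> iet_dom 4 (a3 c)"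
      unfolding dom using c by (auto simp: numeral_eq_Suc less_Suc_eq T3_def)
    show "\<And>z. 0 \<le> z \<Longrightarrow> z \<le> 3 \<Longrightarrow> \<exists>j<3. \<exists>y. 0 \<le> y \<and> y \<le> 1 \<and> (z::real) = [2,0,2] ! j + [1,1,-1] ! j * y"
    proof -
      fix z :: real assume z: "0 \<le> z" "z \<le> 3"
      show "\<exists>j<3. \<exists>y. 0 \<le> y \<and> y \<le> 1 \<and> (z::real) = [2,0,2] ! j + [1,1,-1] ! j * y"
      proof -
        consider "z \<le> 1" | "1 \<le> z" "z \<le> 2" | "2 \<le> z" by linarith
        then show ?thesis
        proof cases
          case 1 then show ?thesis using z by (intro cov_pos[where j=1]) simp_all
        next
          case 2 then show ?thesis using z by (intro cov_neg[where j=2]) simp_all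
        next
          case 3 then show ?thesis using z by (intro cov_pos[where j=0]) simp_all
        qed
      qed
    qed
  qed (use c in auto)
  show ?thesis using IET tr flips fake by blast
qed

definition "a4 c = (\<lambda>i. [0, 1, 2, 3, 3 + c, 4::real] ! i)"
definition "u4 c = (\<lambda>i. [0, 2, 4, 6, 3 + c, 4 + c::real] ! i)"
definition "s4 = (\<lambda>i. [0, -1, -1, -1, -1, -1::real] ! i)"
definition "T4 c x = (if x < 1 then 2 - x else if x < 2 then 4 - x else if x < 3 then 6 - x else if x < 3 + c then 3 + c - x else (4::real) + c - x)"

lemma iet_ex4:
  fixes c :: real
  assumes c: "c \<notin> \<rat>" "0 < c" "c < 1/2"
  shows "is_IET 5 4 (a4 c) (T4 c) \<and> iet_transitive 5 4 (a4 c) (T4 c) \<and>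
         num_flips 5 (a4 c) (T4 c) = 5 \<and> no_fake_discontinuity 5 (a4 c) (T4 c)"
proof -
  have aff: "\<forall>i\<in>{1..5}. \<forall>x\<in>dom_int (a4 c) i. T4 c x = u4 c i + s4 i * x"
    unfolding set15 using c by (auto simp: dom_int_def a4_def u4_def s4_def T4_def)
  have s: "\<forall>i\<in>{1..5}. s4 i = 1 \<or> s4 i = -1" unfolding set15 by (simp add: s4_def)
  have mono: "\<forall>i<5. a4 c i < a4 c (i + 1)" using c by (simp add: all5 a4_def)
  have IET: "is_IET 5 4 (a4 c) (T4 c)"
  proof (rule is_IET_generic[OF _ _ _ mono aff s])
    show "\<forall>i\<in>{1..5}. \<forall>j\<in>{1..5}. i < j \<longrightarrow> hi (a4 c) (u4 c) s4 i \<le> lo (a4 c) (u4 c) s4 j \<or>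
          hi (a4 c) (u4 c) s4 j \<le> lo (a4 c) (u4 c) s4 i"
      using c unfolding set15 by (simp add: hi_def lo_def a4_def u4_def s4_def)
    show "\<forall>i\<in>{1..5}. 0 \<le> lo (a4 c) (u4 c) s4 i \<and> hi (a4 c) (u4 c) s4 i \<le> 4"
      using c unfolding set15 by (simp add: hi_def lo_def a4_def u4_def s4_def)
    show "\<forall>i\<in>{1..5 - 1}. u4 c i + s4 i * a4 c i \<noteq> u4 c (i + 1) + s4 (i + 1) * a4 c i"
      unfolding set15m using c by (simp add: a4_def u4_def s4_def)
  qed (simp_all add: a4_def)
  have lt: "a4 c (i - 1) < a4 c i" if "i \<in> {1..5}" for i
    using mono[rule_format, of "i - 1"] that by auto
  have th: "iet_theta (a4 c) (T4 c) i = (if s4 i = 1 then 1 else -1)" if "i \<in> {1..5}" for i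
    using theta_generic[OF lt[OF that]] aff s that by blast
  have th1: "iet_theta (a4 c) (T4 c) 1 = -1" "iet_theta (a4 c) (T4 c) 2 = -1" "iet_theta (a4 c) (T4 c) 3 = -1" "iet_theta (a4 c) (T4 c) 4 = -1" "iet_theta (a4 c) (T4 c) 5 = -1"
    using th[of 1] th[of 2] th[of 3] th[of 4] th[of 5] by (simp_all add: s4_def)
  have Tm: "T4 c (iet_mid (a4 c) 1) = 3 / 2" "T4 c (iet_mid (a4 c) 2) = 5 / 2" "T4 c (iet_mid (a4 c) 3) = 7 / 2" "T4 c (iet_mid (a4 c) 4) = c / 2" "T4 c (iet_mid (a4 c) 5) = (1 + c) / 2"
    using c by (simp_all add: T4_def iet_mid_def a4_def field_simps)
  have pi: "iet_pi 5 (a4 c) (T4 c) 1 = 3" "iet_pi 5 (a4 c) (T4 c) 2 = 4" "iet_pi 5 (a4 c) (T4 c) 3 = 5" "iet_pi 5 (a4 c) (T4 c) 4 = 1" "iet_pi 5 (a4 c) (T4 c) 5 = 2"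
    unfolding iet_pi_def cf5 using c by (simp_all add: Tm Tm(1)[unfolded One_nat_def] field_simps)
  have flips: "num_flips 5 (a4 c) (T4 c) = 5"
    unfolding num_flips_def cf5 by (simp add: th1 th1(1)[unfolded One_nat_def])
  have fake: "no_fake_discontinuity 5 (a4 c) (T4 c)"
    unfolding no_fake_discontinuity_def fake_count_def Let_def
    unfolding cf5m by (simp add: th1 pi th1(1)[unfolded One_nat_def] pi(1)[unfolded One_nat_def])
  have dom: "iet_dom 5 (a4 c) = {0<..<1} \<union> {1<..<2} \<union> {2<..<3} \<union> {3<..<3+c} \<union> {3+c<..<4}"
    unfolding iet_dom_def set15 by (simp add: dom_int_def a4_def Un_ac)
  have tr: "iet_transitive 5 4 (a4 c) (T4 c)"
  proof (rule transitive_generic[where m=4 and b=0 and cc="\<lambda>j. [0,2,2,4] ! j" and ss="\<lambda>j. [1,-1,1,-1] ! j"])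
    show "c \<notin> \<rat>" "0 < c" "c < 1" using c by auto
    show "\<And>j. j < 4 \<Longrightarrow> \<bar>[1,-1,1,-1::real] ! j\<bar> = 1" by (auto simp: numeral_eq_Suc less_Suc_eq)
    show "\<And>x. 0 < x \<Longrightarrow> x < 1 \<Longrightarrow> x + c \<noteq> 1 \<Longrightarrow> (T4 c ^^ 4) (0 + x) = 0 + rot c x"
      using c by (auto simp: numeral_eq_Suc T4_def rot_def)
    show "\<And>x j. 0 < x \<Longrightarrow> x < 1 \<Longrightarrow> x + c \<noteq> 1 \<Longrightarrow> j < 4 \<Longrightarrow>
        (T4 c ^^ j) (0 + x) = [0,2,2,4] ! j + [1,-1,1,-1] ! j * x \<and> [0,2,2,4] ! j + [1,-1,1,-1] ! j * x \<in> iet_dom 5 (a4 c)"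
      unfolding dom using c by (auto simp: numeral_eq_Suc less_Suc_eq T4_def)
    show "\<And>z. 0 \<le> z \<Longrightarrow> z \<le> 4 \<Longrightarrow> \<exists>j<4. \<exists>y. 0 \<le> y \<and> y \<le> 1 \<and> (z::real) = [0,2,2,4] ! j + [1,-1,1,-1] ! j * y"
    proof -
      fix z :: real assume z: "0 \<le> z" "z \<le> 4"
      show "\<exists>j<4. \<exists>y. 0 \<le> y \<and> y \<le> 1 \<and> (z::real) = [0,2,2,4] ! j + [1,-1,1,-1] ! j * y"
      proof -
        consider "z \<le> 1" | "1 \<le> z" "z \<le> 2" | "2 \<le> z" "z \<le> 3" | "3 \<le> z" by linarith
        then show ?thesis
        proof cases
          case 1 then show ?thesis using z by (intro cov_pos[where j=0]) simp_all
        next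
          case 2 then show ?thesis using z by (intro cov_neg[where j=1]) simp_all
        next
          case 3 then show ?thesis using z by (intro cov_pos[where j=2]) simp_all
        next
          case 4 then show ?thesis using z by (intro cov_neg[where j=3]) simp_all
        qed
      qed
    qed
  qed (use c in auto)
  show ?thesis using IET tr flips fake by blast
qed

definition "a5 c = (\<lambda>i. [0, 1, 2, 2 + c, 3, 4::real] ! i)"
definition "u5 c = (\<lambda>i. [0, 2, 5, 2 + c, 3 + c, 6::real] ! i)"
definition "s5 = (\<lambda>i. [0, -1, -1, -1, -1, -1::real] ! i)"
definition "T5 c x = (if x < 1 then 2 - x else if x < 2 then 5 - x else if x < 2 + c then 2 + c - x else if x < 3 then 3 + c - x else (6::real) - x)"

lemma iet_ex5:
  fixes c :: real
  assumes c: "c \<notin> \<rat>" "0 < c" "c < 1/2"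
  shows "is_IET 5 4 (a5 c) (T5 c) \<and> iet_transitive 5 4 (a5 c) (T5 c) \<and>
         num_flips 5 (a5 c) (T5 c) = 5 \<and> has_fake_discontinuity 5 (a5 c) (T5 c)"
proof -
  have aff: "\<forall>i\<in>{1..5}. \<forall>x\<in>dom_int (a5 c) i. T5 c x = u5 c i + s5 i * x"
    unfolding set15 using c by (auto simp: dom_int_def a5_def u5_def s5_def T5_def)
  have s: "\<forall>i\<in>{1..5}. s5 i = 1 \<or> s5 i = -1" unfolding set15 by (simp add: s5_def)
  have mono: "\<forall>i<5. a5 c i < a5 c (i + 1)" using c by (simp add: all5 a5_def)
  have IET: "is_IET 5 4 (a5 c) (T5 c)"
  proof (rule is_IET_generic[OF _ _ _ mono aff s])
    show "\<forall>i\<in>{1..5}. \<forall>j\<in>{1..5}. i < j \<longrightarrow> hi (a5 c) (u5 c) s5 i \<le> lo (a5 c) (u5 c) s5 j \<or>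
          hi (a5 c) (u5 c) s5 j \<le> lo (a5 c) (u5 c) s5 i"
      using c unfolding set15 by (simp add: hi_def lo_def a5_def u5_def s5_def)
    show "\<forall>i\<in>{1..5}. 0 \<le> lo (a5 c) (u5 c) s5 i \<and> hi (a5 c) (u5 c) s5 i \<le> 4"
      using c unfolding set15 by (simp add: hi_def lo_def a5_def u5_def s5_def)
    show "\<forall>i\<in>{1..5 - 1}. u5 c i + s5 i * a5 c i \<noteq> u5 c (i + 1) + s5 (i + 1) * a5 c i"
      unfolding set15m using c by (simp add: a5_def u5_def s5_def)
  qed (simp_all add: a5_def)
  have lt: "a5 c (i - 1) < a5 c i" if "i \<in> {1..5}" for i
    using mono[rule_format, of "i - 1"] that by auto
  have th: "iet_theta (a5 c) (T5 c) i = (if s5 i = 1 then 1 else -1)" if "i \<in> {1..5}" for i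
    using theta_generic[OF lt[OF that]] aff s that by blast
  have th1: "iet_theta (a5 c) (T5 c) 1 = -1" "iet_theta (a5 c) (T5 c) 2 = -1" "iet_theta (a5 c) (T5 c) 3 = -1" "iet_theta (a5 c) (T5 c) 4 = -1" "iet_theta (a5 c) (T5 c) 5 = -1"
    using th[of 1] th[of 2] th[of 3] th[of 4] th[of 5] by (simp_all add: s5_def)
  have Tm: "T5 c (iet_mid (a5 c) 1) = 3 / 2" "T5 c (iet_mid (a5 c) 2) = 7 / 2" "T5 c (iet_mid (a5 c) 3) = c / 2" "T5 c (iet_mid (a5 c) 4) = (1 + c) / 2" "T5 c (iet_mid (a5 c) 5) = 5 / 2"
    using c by (simp_all add: T5_def iet_mid_def a5_def field_simps)
  have pi: "iet_pi 5 (a5 c) (T5 c) 1 = 3" "iet_pi 5 (a5 c) (T5 c) 2 = 5" "iet_pi 5 (a5 c) (T5 c) 3 = 1" "iet_pi 5 (a5 c) (T5 c) 4 = 2" "iet_pi 5 (a5 c) (T5 c) 5 = 4"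
    unfolding iet_pi_def cf5 using c by (simp_all add: Tm Tm(1)[unfolded One_nat_def] field_simps)
  have flips: "num_flips 5 (a5 c) (T5 c) = 5"
    unfolding num_flips_def cf5 by (simp add: th1 th1(1)[unfolded One_nat_def])
  have fake: "has_fake_discontinuity 5 (a5 c) (T5 c)"
    unfolding has_fake_discontinuity_def fake_count_def Let_def
    unfolding cf5m by (simp add: th1 pi th1(1)[unfolded One_nat_def] pi(1)[unfolded One_nat_def])
  have dom: "iet_dom 5 (a5 c) = {0<..<1} \<union> {1<..<2} \<union> {2<..<2+c} \<union> {2+c<..<3} \<union> {3<..<4}"
    unfolding iet_dom_def set15 by (simp add: dom_int_def a5_def Un_ac)
  have tr: "iet_transitive 5 4 (a5 c) (T5 c)"
  proof (rule transitive_generic[where m=4 and b=0 and cc="\<lambda>j. [0,2,3,3] ! j" and ss="\<lambda>j. [1,-1,1,-1] ! j"])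
    show "c \<notin> \<rat>" "0 < c" "c < 1" using c by auto
    show "\<And>j. j < 4 \<Longrightarrow> \<bar>[1,-1,1,-1::real] ! j\<bar> = 1" by (auto simp: numeral_eq_Suc less_Suc_eq)
    show "\<And>x. 0 < x \<Longrightarrow> x < 1 \<Longrightarrow> x + c \<noteq> 1 \<Longrightarrow> (T5 c ^^ 4) (0 + x) = 0 + rot c x"
      using c by (auto simp: numeral_eq_Suc T5_def rot_def)
    show "\<And>x j. 0 < x \<Longrightarrow> x < 1 \<Longrightarrow> x + c \<noteq> 1 \<Longrightarrow> j < 4 \<Longrightarrow>
        (T5 c ^^ j) (0 + x) = [0,2,3,3] ! j + [1,-1,1,-1] ! j * x \<and> [0,2,3,3] ! j + [1,-1,1,-1] ! j * x \<in> iet_dom 5 (a5 c)"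
      unfolding dom using c by (auto simp: numeral_eq_Suc less_Suc_eq T5_def)
    show "\<And>z. 0 \<le> z \<Longrightarrow> z \<le> 4 \<Longrightarrow> \<exists>j<4. \<exists>y. 0 \<le> y \<and> y \<le> 1 \<and> (z::real) = [0,2,3,3] ! j + [1,-1,1,-1] ! j * y"
    proof -
      fix z :: real assume z: "0 \<le> z" "z \<le> 4"
      show "\<exists>j<4. \<exists>y. 0 \<le> y \<and> y \<le> 1 \<and> (z::real) = [0,2,3,3] ! j + [1,-1,1,-1] ! j * y"
      proof -
        consider "z \<le> 1" | "1 \<le> z" "z \<le> 2" | "2 \<le> z" "z \<le> 3" | "3 \<le> z" by linarith
        then show ?thesis
        proof cases
          case 1 then show ?thesis using z by (intro cov_pos[where j=0]) simp_all
        next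
          case 2 then show ?thesis using z by (intro cov_neg[where j=1]) simp_all
        next
          case 3 then show ?thesis using z by (intro cov_neg[where j=3]) simp_all
        next
          case 4 then show ?thesis using z by (intro cov_pos[where j=2]) simp_all
        qed
      qed
    qed
  qed (use c in auto)
  show ?thesis using IET tr flips fake by blast
qed


theorem lemma9p3:
  shows "(\<forall>f\<in>{1,2,3::nat}. \<exists>l a T. is_IET 4 l a T \<and> iet_transitive 4 l a T \<and>
            num_flips 4 a T = f \<and> no_fake_discontinuity 4 a T)
       \<and> (\<exists>l a T. is_IET 5 l a T \<and> iet_transitive 5 l a T \<and>
            num_flips 5 a T = 5 \<and> has_fake_discontinuity 5 a T)
       \<and> (\<exists>l a T. is_IET 5 l a T \<and> iet_transitive 5 l a T \<and>
            num_flips 5 a T = 5 \<and> no_fake_discontinuity 5 a T)"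
proof -
  obtain c :: real where c: "c \<notin> \<rat>" "0 < c" "c < 1/2" using exists_irrat by blast
  have e1: "\<exists>l a T. is_IET 4 l a T \<and> iet_transitive 4 l a T \<and> num_flips 4 a T = 1 \<and> no_fake_discontinuity 4 a T"
    using iet_ex1[OF c] by blast
  have e2: "\<exists>l a T. is_IET 4 l a T \<and> iet_transitive 4 l a T \<and> num_flips 4 a T = 2 \<and> no_fake_discontinuity 4 a T"
    using iet_ex2[OF c] by blast
  have e3: "\<exists>l a T. is_IET 4 l a T \<and> iet_transitive 4 l a T \<and> num_flips 4 a T = 3 \<and> no_fake_discontinuity 4 a T"
    using iet_ex3[OF c] by blast
  have e4: "\<exists>l a T. is_IET 5 l a T \<and> iet_transitive 5 l a T \<and> num_flips 5 a T = 5 \<and> no_fake_discontinuity 5 a T"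
    using iet_ex4[OF c] by blast
  have e5: "\<exists>l a T. is_IET 5 l a T \<and> iet_transitive 5 l a T \<and> num_flips 5 a T = 5 \<and> has_fake_discontinuity 5 a T"
    using iet_ex5[OF c] by blast
  show ?thesis using e1 e2 e3 e4 e5 by auto
qed

end
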